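(* Let $G=(V,E)$ be a directed multigraph with arc costs $c\in\mathbb{R}^E$ and gains $\gamma\in\mathbb{R}^E_{>0}$, and $u\in V$. Let $\mathcal{D}:=\{x\in\mathbb{R}^E_{\ge0}: x(\delta^+(u))=1,\ \nabla x_v=0\ \forall v\in V\setminus\{u\}\}$, let $f(\delta):=\inf_{x\in\mathcal{D}}\big(c^\top x-\delta(1-\sum_{e\in\delta^-(u)}\gamma_ex_e)\big)$, and consider the problem (F$_u$): $\inf\ c^\top x/(1-\sum_{e\in\delta^-(u)}\gamma_ex_e)$ subject to $1-\sum_{e\in\delta^-(u)}\gamma_ex_e>0$, $x\in\mathcal{D}$. Let $x$ be a feasible solution to (F$_u$) and $\bar\delta:=c^\top x/(1-\sum_{e\in\delta^-(u)}\gamma_ex_e)$. If either $f(\bar\delta)=-\infty$, or $f(\bar\delta)=c^\top\bar x-\bar\delta(1-\sum_{e\in\delta^-(u)}\gamma_e\bar x_e)<0$ for some $\bar x\in\mathcal{D}$ with $1-\sum_{e\in\delta^-(u)}\gamma_e\bar x_e\le0$, then the optimal value of (F$_u$) is $-\infty$.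
   Context: $\delta^+(v)$, $\delta^-(v)$ are the sets of arcs leaving/entering $v$; $x(F):=\sum_{e\in F}x_e$; the net flow at $v$ is $\nabla x_v:=\sum_{e\in\delta^+(v)}x_e-\sum_{e\in\delta^-(v)}\gamma_ex_e$. *)

theory Defs
  imports "HOL-Analysis.Analysis"
begin

text \<open>A directed multigraph: vertex set V, arc set E, each arc e goes from
  tail tail e to head head e. Flows are real functions on arcs (values off E are irrelevant).\<close>

definition dmultigraph :: "'v set \<Rightarrow> 'e set \<Rightarrow> ('e \<Rightarrow> 'v) \<Rightarrow> ('e \<Rightarrow> 'v) \<Rightarrow> bool" where
  "dmultigraph V E tail head \<longleftrightarrow> finite V \<and> finite E \<and> (\<forall>e\<in>E. tail e \<in> V \<and> head e \<in> V)"

definition out_arcs :: "'e set \<Rightarrow> ('e \<Rightarrow> 'v) \<Rightarrow> 'v \<Rightarrow> 'e set" where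
  "out_arcs E tail v = {e\<in>E. tail e = v}"

definition in_arcs :: "'e set \<Rightarrow> ('e \<Rightarrow> 'v) \<Rightarrow> 'v \<Rightarrow> 'e set" where
  "in_arcs E head v = {e\<in>E. head e = v}"

definition net_flow :: "'e set \<Rightarrow> ('e \<Rightarrow> 'v) \<Rightarrow> ('e \<Rightarrow> 'v) \<Rightarrow> ('e \<Rightarrow> real) \<Rightarrow> ('e \<Rightarrow> real) \<Rightarrow> 'v \<Rightarrow> real" where
  "net_flow E tail head \<gamma> x v = (\<Sum>e\<in>out_arcs E tail v. x e) - (\<Sum>e\<in>in_arcs E head v. \<gamma> e * x e)"

definition flowD :: "'v set \<Rightarrow> 'e set \<Rightarrow> ('e \<Rightarrow> 'v) \<Rightarrow> ('e \<Rightarrow> 'v) \<Rightarrow> ('e \<Rightarrow> real) \<Rightarrow> 'v \<Rightarrow> ('e \<Rightarrow> real) set" where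
  "flowD V E tail head \<gamma> u = {x. (\<forall>e\<in>E. 0 \<le> x e) \<and> (\<Sum>e\<in>out_arcs E tail u. x e) = 1
       \<and> (\<forall>v\<in>V - {u}. net_flow E tail head \<gamma> x v = 0)}"

definition cost :: "'e set \<Rightarrow> ('e \<Rightarrow> real) \<Rightarrow> ('e \<Rightarrow> real) \<Rightarrow> real" where
  "cost E c x = (\<Sum>e\<in>E. c e * x e)"

definition denom :: "'e set \<Rightarrow> ('e \<Rightarrow> 'v) \<Rightarrow> ('e \<Rightarrow> real) \<Rightarrow> 'v \<Rightarrow> ('e \<Rightarrow> real) \<Rightarrow> real" where
  "denom E head \<gamma> u x = 1 - (\<Sum>e\<in>in_arcs E head u. \<gamma> e * x e)"

definition fparam :: "'v set \<Rightarrow> 'e set \<Rightarrow> ('e \<Rightarrow> 'v) \<Rightarrow> ('e \<Rightarrow> 'v) \<Rightarrow> ('e \<Rightarrow> real) \<Rightarrow> ('e \<Rightarrow> real) \<Rightarrow> 'v \<Rightarrow> real \<Rightarrow> ereal" where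
  "fparam V E tail head c \<gamma> u \<delta> =
     (INF x\<in>flowD V E tail head \<gamma> u. ereal (cost E c x - \<delta> * denom E head \<gamma> u x))"

definition feasF :: "'v set \<Rightarrow> 'e set \<Rightarrow> ('e \<Rightarrow> 'v) \<Rightarrow> ('e \<Rightarrow> 'v) \<Rightarrow> ('e \<Rightarrow> real) \<Rightarrow> 'v \<Rightarrow> ('e \<Rightarrow> real) set" where
  "feasF V E tail head \<gamma> u = {x\<in>flowD V E tail head \<gamma> u. denom E head \<gamma> u x > 0}"

definition optF :: "'v set \<Rightarrow> 'e set \<Rightarrow> ('e \<Rightarrow> 'v) \<Rightarrow> ('e \<Rightarrow> 'v) \<Rightarrow> ('e \<Rightarrow> real) \<Rightarrow> ('e \<Rightarrow> real) \<Rightarrow> 'v \<Rightarrow> ereal" where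
  "optF V E tail head c \<gamma> u =
     (INF x\<in>feasF V E tail head \<gamma> u. ereal (cost E c x / denom E head \<gamma> u x))"

end

theory Submission
  imports Defs
begin

lemma optF_minf_crit:
  assumes "\<And>M::real. \<exists>y\<in>feasF V E tail head \<gamma> u. cost E c y / denom E head \<gamma> u y < M"
  shows "optF V E tail head c \<gamma> u = -\<infinity>"
  unfolding optF_def
proof (rule ccontr)
  assume "(INF x\<in>feasF V E tail head \<gamma> u. ereal (cost E c x / denom E head \<gamma> u x)) \<noteq> - \<infinity>"
  then obtain b where b: "b > -\<infinity>" "\<forall>i\<in>feasF V E tail head \<gamma> u. b \<le> ereal (cost E c i / denom E head \<gamma> u i)"
    unfolding INF_eq_minf by blast
  obtain r where r: "ereal r \<le> b"
    using b(1) by (cases b) auto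
  from assms[of r] obtain y where y: "y \<in> feasF V E tail head \<gamma> u" "cost E c y / denom E head \<gamma> u y < r" by blast
  have "b \<le> ereal (cost E c y / denom E head \<gamma> u y)" using b(2) y(1) by blast
  with r have "ereal r \<le> ereal (cost E c y / denom E head \<gamma> u y)" by (rule order.trans)
  with y(2) show False by simp
qed

lemma cost_comb: "cost E c (\<lambda>e. (1-t) * x e + t * y e) = (1-t) * cost E c x + t * cost E c y"
proof -
  have "\<And>e. c e * ((1-t) * x e + t * y e) = (1-t) * (c e * x e) + t * (c e * y e)"
    by (simp add: algebra_simps)
  then show ?thesis unfolding cost_def by (simp only: sum.distrib sum_distrib_left[symmetric])
qed

lemma denom_comb: "denom E head \<gamma> u (\<lambda>e. (1-t) * x e + t * y e) = (1-t) * denom E head \<gamma> u x + t * denom E head \<gamma> u y"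
  unfolding denom_def by (simp add: algebra_simps sum.distrib sum_distrib_left sum_subtractf)

lemma flowD_comb:
  assumes "x \<in> flowD V E tail head \<gamma> u" "y \<in> flowD V E tail head \<gamma> u" "0 \<le> t" "t \<le> 1"
  shows "(\<lambda>e. (1-t) * x e + t * y e) \<in> flowD V E tail head \<gamma> u"
proof -
  have nf: "net_flow E tail head \<gamma> (\<lambda>e. (1-t) * x e + t * y e) v
     = (1-t) * net_flow E tail head \<gamma> x v + t * net_flow E tail head \<gamma> y v" for v
    unfolding net_flow_def by (simp add: algebra_simps sum.distrib sum_distrib_left sum_subtractf)
  have o: "(\<Sum>e\<in>out_arcs E tail u. (1-t) * x e + t * y e) = (1-t) * (\<Sum>e\<in>out_arcs E tail u. x e) + t * (\<Sum>e\<in>out_arcs E tail u. y e)"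
    by (simp add: sum.distrib sum_distrib_left)
  show ?thesis using assms unfolding flowD_def
    by (auto simp: nf o)
qed

lemma denom_le1:
  assumes "\<forall>e\<in>E. \<gamma> e > 0" "y \<in> flowD V E tail head \<gamma> u"
  shows "denom E head \<gamma> u y \<le> 1"
proof -
  have "0 \<le> (\<Sum>e\<in>in_arcs E head u. \<gamma> e * y e)"
    using assms unfolding flowD_def in_arcs_def
    by (intro sum_nonneg) (metis (mono_tags, lifting) mem_Collect_eq less_imp_le mult_nonneg_nonneg)
  then show ?thesis unfolding denom_def by simp
qed

theorem lemma4p4:
  fixes V :: "'v set" and E :: "'e set" and tail head :: "'e \<Rightarrow> 'v"
    and c \<gamma> x :: "'e \<Rightarrow> real" and u :: 'v and \<delta> :: real
  assumes G: "dmultigraph V E tail head"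
    and gam: "\<forall>e\<in>E. \<gamma> e > 0"
    and uV: "u \<in> V"
    and xfeas: "x \<in> feasF V E tail head \<gamma> u"
    and dl: "\<delta> = cost E c x / denom E head \<gamma> u x"
    and cond: "fparam V E tail head c \<gamma> u \<delta> = -\<infinity> \<or>
       (\<exists>xb\<in>flowD V E tail head \<gamma> u. denom E head \<gamma> u xb \<le> 0 \<and>
          fparam V E tail head c \<gamma> u \<delta> = ereal (cost E c xb - \<delta> * denom E head \<gamma> u xb) \<and>
          cost E c xb - \<delta> * denom E head \<gamma> u xb < 0)"
  shows "optF V E tail head c \<gamma> u = -\<infinity>"
proof -
  define D where "D = denom E head \<gamma> u"
  define C where "C = cost E c"
  have xD: "x \<in> flowD V E tail head \<gamma> u" and ax: "D x > 0"
    using xfeas unfolding feasF_def D_def by auto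
  have Cx: "C x = \<delta> * D x" using dl ax unfolding C_def D_def by simp
  have key: "\<exists>y\<in>feasF V E tail head \<gamma> u. C y / D y < M"
    if xb: "xb \<in> flowD V E tail head \<gamma> u" "D xb \<le> 0" "C xb - \<delta> * D xb < 0" for xb M
  proof -
    define a where "a = D x"
    define b where "b = D xb"
    define k where "k = a - b"
    define gb where "gb = C xb - \<delta> * D xb"
    have a0: "a > 0" using ax a_def by simp
    have k0: "k > 0" using a0 xb(2) unfolding k_def b_def by simp
    have ts: "a / k \<le> 1" "a / k > 0" using a0 k0 xb(2) unfolding k_def b_def by (auto simp: divide_simps)
    define m where "m = - (a / k / 2) * gb"
    have gbneg: "gb < 0" using xb(3) gb_def by simp
    have "(a/k/2) * gb < 0" using ts(2) gbneg by (intro mult_pos_neg) auto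
    hence m0: "m > 0" unfolding m_def by simp
    define \<epsilon> where "\<epsilon> = min (a/2) (m / (\<bar>\<delta> - M\<bar> + 1))"
    have e0: "\<epsilon> > 0" using a0 m0 unfolding \<epsilon>_def by simp
    have e1: "\<epsilon> \<le> a/2" unfolding \<epsilon>_def by (rule min.cobounded1)
    have K: "\<bar>\<delta> - M\<bar> + 1 > 0" by simp
    have "\<epsilon> \<le> m / (\<bar>\<delta> - M\<bar> + 1)" unfolding \<epsilon>_def by (rule min.cobounded2)
    hence e2: "\<epsilon> * (\<bar>\<delta> - M\<bar> + 1) \<le> m" using K by (simp add: pos_le_divide_eq)
    define t where "t = (a - \<epsilon>) / k"
    have ae: "a - \<epsilon> \<ge> a/2" using e1 by simp
    have "a/k/2 = (a/2)/k" by simp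
    also have "\<dots> \<le> t" unfolding t_def using ae k0 by (intro divide_right_mono) auto
    finally have t0: "t \<ge> a / k / 2" .
    have "t \<le> a / k" unfolding t_def using e0 k0 by (intro divide_right_mono) auto
    hence t1a: "t \<le> 1" using ts by simp
    have t1b: "0 \<le> t" unfolding t_def using ae a0 k0 by simp
    note t1 = t1a t1b
    define y where "y = (\<lambda>e. (1-t) * x e + t * xb e)"
    have yD: "y \<in> flowD V E tail head \<gamma> u" unfolding y_def using flowD_comb[OF xD xb(1) t1(2) t1(1)] .
    have Dy: "D y = \<epsilon>"
    proof -
      have "D y = (1-t) * a + t * b" unfolding y_def D_def a_def b_def by (rule denom_comb)
      also have "\<dots> = a - t * k" by (simp add: k_def algebra_simps)
      also have "\<dots> = \<epsilon>" using k0 by (simp add: t_def)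
      finally show ?thesis .
    qed
    have Cy: "C y = \<delta> * \<epsilon> + t * gb"
    proof -
      have "C y = (1-t) * C x + t * C xb" unfolding y_def C_def by (rule cost_comb)
      also have "\<dots> = \<delta> * ((1-t) * a + t * b) + t * gb"
        using Cx by (simp add: a_def b_def gb_def algebra_simps)
      also have "(1-t) * a + t * b = \<epsilon>" using Dy
        unfolding y_def D_def a_def b_def by (simp add: denom_comb)
      finally show ?thesis .
    qed
    have "t * gb \<le> (a / k / 2) * gb" by (rule mult_right_mono_neg[OF t0 less_imp_le[OF gbneg]])
    hence tg: "t * gb \<le> - m" unfolding m_def by simp
    have "C y / D y = \<delta> + t * gb / \<epsilon>" using Cy Dy e0 by (simp add: field_simps)
    also have "t * gb / \<epsilon> \<le> - m / \<epsilon>" using divide_right_mono[OF tg less_imp_le[OF e0]] by simp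
    also have "- m / \<epsilon> \<le> - (\<bar>\<delta> - M\<bar> + 1)"
    proof -
      have "\<bar>\<delta> - M\<bar> + 1 \<le> m / \<epsilon>" using e2 e0 by (simp add: pos_le_divide_eq mult.commute)
      then show ?thesis by simp
    qed
    finally have "C y / D y \<le> \<delta> - (\<bar>\<delta> - M\<bar> + 1)" by simp
    hence "C y / D y < M" by linarith
    moreover have "y \<in> feasF V E tail head \<gamma> u" using yD Dy e0 unfolding feasF_def D_def by simp
    ultimately show ?thesis by blast
  qed
  show ?thesis
  proof (rule optF_minf_crit)
    fix M :: real
    show "\<exists>y\<in>feasF V E tail head \<gamma> u. cost E c y / denom E head \<gamma> u y < M"
      using cond
    proof
      assume fm: "fparam V E tail head c \<gamma> u \<delta> = -\<infinity>"
      have nb: "\<not> (\<exists>b>-\<infinity>. \<forall>i\<in>flowD V E tail head \<gamma> u. b \<le> ereal (C i - \<delta> * D i))"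
      proof -
        have fm': "(INF i\<in>flowD V E tail head \<gamma> u. ereal (C i - \<delta> * D i)) = -\<infinity>"
          using fm unfolding fparam_def C_def D_def by simp
        show ?thesis using fm' INF_eq_minf[of "\<lambda>i. ereal (C i - \<delta> * D i)" "flowD V E tail head \<gamma> u"] by blast
      qed
      have "\<not> (\<forall>y\<in>flowD V E tail head \<gamma> u. ereal (min 0 (M - \<delta>)) \<le> ereal (C y - \<delta> * D y))"
      proof
        assume "\<forall>y\<in>flowD V E tail head \<gamma> u. ereal (min 0 (M - \<delta>)) \<le> ereal (C y - \<delta> * D y)"
        moreover have "ereal (min 0 (M - \<delta>)) > -\<infinity>" by simp
        ultimately show False using nb by blast
      qed
      then obtain y where y: "y \<in> flowD V E tail head \<gamma> u" "C y - \<delta> * D y < min 0 (M - \<delta>)"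
        by (metis ereal_less_eq(3) not_le_imp_less)
      show ?thesis
      proof (cases "D y > 0")
        case True
        have d1: "D y \<le> 1" using denom_le1[OF gam y(1)] D_def by simp
        define g where "g = C y - \<delta> * D y"
        have gn: "g \<le> 0" using y(2) g_def by simp
        have "g * (D y - 1) \<ge> 0" using gn d1 by (intro mult_nonpos_nonpos) auto
        hence "g \<le> g * D y" by (simp add: algebra_simps)
        hence "(C y - \<delta> * D y) / D y \<le> C y - \<delta> * D y"
          using True unfolding g_def[symmetric] by (simp add: pos_divide_le_eq)
        moreover have "C y / D y = \<delta> + (C y - \<delta> * D y) / D y" using True by (simp add: field_simps)
        ultimately have "C y / D y < M" using y(2) by linarith
        moreover have "y \<in> feasF V E tail head \<gamma> u" using y True unfolding feasF_def D_def by simp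
        ultimately show ?thesis unfolding C_def D_def by blast
      next
        case False
        have d0: "D y \<le> 0" using False by simp
        have g0: "C y - \<delta> * D y < 0" using y(2) by simp
        from key[OF y(1) d0 g0] show ?thesis unfolding C_def D_def .
      qed
    next
      assume "\<exists>xb\<in>flowD V E tail head \<gamma> u. denom E head \<gamma> u xb \<le> 0 \<and>
          fparam V E tail head c \<gamma> u \<delta> = ereal (cost E c xb - \<delta> * denom E head \<gamma> u xb) \<and>
          cost E c xb - \<delta> * denom E head \<gamma> u xb < 0"
      then obtain xb where xb: "xb \<in> flowD V E tail head \<gamma> u" "D xb \<le> 0" "C xb - \<delta> * D xb < 0"
        unfolding C_def D_def by blast
      from key[OF xb] show ?thesis unfolding C_def D_def .
    qed
  qed
qed

end
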